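(* For all $n\ge 1$, $f(n)\ge 2n^2+4n+1$.
   Context: For $n\ge 1$, $A_n$ denotes the finite integral symmetric relation algebra with atoms $1'$, $r$, $b_1,\dots,b_n$, all symmetric, in which a diversity cycle $xyz$ is mandatory (i.e. $x;y\ge z$) if and only if it involves $r$, and forbidden (i.e. $x;y\cdot z=0$) otherwise. A representation over a set $U$ is an embedding into the full relation algebra on $U\times U$. $\operatorname{Spec}(A)$ is the set of cardinals $\alpha\le\omega$ such that $A$ has a representation over a set of cardinality $\alpha$, and $f(n)=\min\operatorname{Spec}(A_n)$. *)

theory Defs
  imports Main "HOL-Library.Extended_Nat"
begin

text \<open>Atoms of the relation algebra A_n: the identity 1', the atom r, and b_1,...,b_n.\<close>
datatype atom = One | R | B nat

definition Atoms :: "nat \<Rightarrow> atom set" where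
  "Atoms n = {One, R} \<union> B ` {1..n}"

definition DivAtoms :: "nat \<Rightarrow> atom set" where
  "DivAtoms n = Atoms n - {One}"

text \<open>Composition of atoms in A_n. 1' is the identity; for diversity atoms x, y,
  x;y contains 1' iff x = y (all atoms are symmetric), and contains a diversity atom z
  iff the cycle xyz is mandatory, i.e. iff it involves r.\<close>
definition atom_comp :: "nat \<Rightarrow> atom \<Rightarrow> atom \<Rightarrow> atom set" where
  "atom_comp n x y =
    (if x = One then {y}
     else if y = One then {x}
     else (if x = y then {One} else {}) \<union> {z \<in> DivAtoms n. x = R \<or> y = R \<or> z = R})"

text \<open>The operations of A_n, whose elements are the subsets of Atoms n.\<close>
definition A_comp :: "nat \<Rightarrow> atom set \<Rightarrow> atom set \<Rightarrow> atom set" where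
  "A_comp n X Y = (\<Union>x\<in>X. \<Union>y\<in>Y. atom_comp n x y)"

definition A_conv :: "atom set \<Rightarrow> atom set" where
  "A_conv X = X"  \<comment> \<open>all atoms are symmetric\<close>

definition A_compl :: "nat \<Rightarrow> atom set \<Rightarrow> atom set" where
  "A_compl n X = Atoms n - X"

definition is_rep :: "nat \<Rightarrow> 'u set \<Rightarrow> (atom set \<Rightarrow> ('u \<times> 'u) set) \<Rightarrow> bool" where
  "is_rep n U h \<longleftrightarrow>
     inj_on h (Pow (Atoms n)) \<and>
     (\<forall>X \<in> Pow (Atoms n). h X \<subseteq> U \<times> U) \<and>
     (\<forall>X \<in> Pow (Atoms n). \<forall>Y \<in> Pow (Atoms n). h (X \<union> Y) = h X \<union> h Y) \<and>
     (\<forall>X \<in> Pow (Atoms n). h (A_compl n X) = (U \<times> U) - h X) \<and>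
     (\<forall>X \<in> Pow (Atoms n). \<forall>Y \<in> Pow (Atoms n). h (A_comp n X Y) = h X O h Y) \<and>
     (\<forall>X \<in> Pow (Atoms n). h (A_conv X) = converse (h X)) \<and>
     h {One} = Id_on U"

text \<open>Spec(A_n): cardinals \<le> \<omega> (as enat, \<infinity> = \<omega>) of base sets of representations.
  Any set of cardinality \<le> \<omega> is in bijection with a subset of nat, so it suffices
  to consider U \<subseteq> nat.\<close>
definition Spec :: "nat \<Rightarrow> enat set" where
  "Spec n = {\<alpha>. \<exists>(U::nat set) h. is_rep n U h \<and>
                 \<alpha> = (if finite U then enat (card U) else \<infinity>)}"

definition f :: "nat \<Rightarrow> enat" where
  "f n = Inf (Spec n)"

end

theory Submission
  imports Defs
begin

lemma card_Div: "card (DivAtoms n) = n + 1"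
proof -
  have "DivAtoms n = insert R (B ` {1..n})"
    by (auto simp: DivAtoms_def Atoms_def)
  moreover have "R \<notin> B ` {1..n}" by auto
  moreover have "card (B ` {1..n}) = n" by (simp add: card_image inj_on_def)
  ultimately show ?thesis by simp
qed

lemma finite_Atoms: "finite (Atoms n)"
  by (simp add: Atoms_def)

context
  fixes n :: nat and U :: "'u set" and h :: "atom set \<Rightarrow> ('u \<times> 'u) set"
  assumes rep: "is_rep n U h"
begin

lemma P_inj: "inj_on h (Pow (Atoms n))"
  using rep by (simp add: is_rep_def)
lemma P_sub: "\<forall>X \<in> Pow (Atoms n). h X \<subseteq> U \<times> U"
  using rep by (simp add: is_rep_def)
lemma P_un: "\<forall>X \<in> Pow (Atoms n). \<forall>Y \<in> Pow (Atoms n). h (X \<union> Y) = h X \<union> h Y"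
  using rep by (simp add: is_rep_def)
lemma P_compl: "\<forall>X \<in> Pow (Atoms n). h (A_compl n X) = (U \<times> U) - h X"
  using rep by (simp add: is_rep_def)
lemma P_comp: "\<forall>X \<in> Pow (Atoms n). \<forall>Y \<in> Pow (Atoms n). h (A_comp n X Y) = h X O h Y"
  using rep by (simp add: is_rep_def)
lemma P_conv: "\<forall>X \<in> Pow (Atoms n). h (A_conv X) = converse (h X)"
  using rep by (simp add: is_rep_def)
lemma hid: "h {One} = Id_on U"
  using rep by (simp add: is_rep_def)

lemma hsub: "X \<subseteq> Atoms n \<Longrightarrow> h X \<subseteq> U \<times> U"
  using P_sub by simp

lemma hun: "X \<subseteq> Atoms n \<Longrightarrow> Y \<subseteq> Atoms n \<Longrightarrow> h (X \<union> Y) = h X \<union> h Y"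
  using P_un by simp

lemma hmono: "X \<subseteq> Y \<Longrightarrow> Y \<subseteq> Atoms n \<Longrightarrow> h X \<subseteq> h Y"
proof -
  assume a: "X \<subseteq> Y" "Y \<subseteq> Atoms n"
  then have "h Y = h (X \<union> Y)" by (simp add: sup.absorb2)
  also have "\<dots> = h X \<union> h Y" using a hun by blast
  finally show ?thesis by blast
qed

lemma hcompl: "X \<subseteq> Atoms n \<Longrightarrow> h (Atoms n - X) = U \<times> U - h X"
  using P_compl by (simp add: A_compl_def)

lemma hempty: "h {} = {}"
proof -
  have "h {} \<subseteq> h (Atoms n)" by (rule hmono) auto
  moreover have "h {} = U \<times> U - h (Atoms n)" using hcompl[of "Atoms n"] by simp
  ultimately show ?thesis by blast
qed

lemma hfull: "h (Atoms n) = U \<times> U"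
  using hcompl[of "{}"] hempty by simp

lemma hdisj: "a \<in> Atoms n \<Longrightarrow> b \<in> Atoms n \<Longrightarrow> a \<noteq> b \<Longrightarrow> h {a} \<inter> h {b} = {}"
proof -
  assume a: "a \<in> Atoms n" "b \<in> Atoms n" "a \<noteq> b"
  have "h {b} \<subseteq> h (Atoms n - {a})" by (rule hmono) (use a in auto)
  also have "\<dots> = U \<times> U - h {a}" using hcompl a by auto
  finally show ?thesis by blast
qed

lemma hunion: "finite X \<Longrightarrow> X \<subseteq> Atoms n \<Longrightarrow> h X = (\<Union>a\<in>X. h {a})"
proof (induction X rule: finite_induct)
  case empty
  then show ?case by (simp add: hempty)
next
  case (insert x F)
  have F: "F \<subseteq> Atoms n" "x \<in> Atoms n" using insert.prems by auto
  have "h (insert x F) = h ({x} \<union> F)" by simp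
  also have "\<dots> = h {x} \<union> h F" using hun[of "{x}" F] F by auto
  finally show ?case using insert.IH[OF F(1)] by simp
qed

lemma cover: "x \<in> U \<Longrightarrow> y \<in> U \<Longrightarrow> \<exists>a\<in>Atoms n. (x, y) \<in> h {a}"
  using hunion[OF finite_Atoms order_refl] hfull by auto

lemma atom_comp_sub: "a \<in> Atoms n \<Longrightarrow> b \<in> Atoms n \<Longrightarrow> atom_comp n a b \<subseteq> Atoms n"
  by (auto simp: atom_comp_def DivAtoms_def Atoms_def)

lemma hcomp: "a \<in> Atoms n \<Longrightarrow> b \<in> Atoms n \<Longrightarrow> h (atom_comp n a b) = h {a} O h {b}"
proof -
  assume a: "a \<in> Atoms n" "b \<in> Atoms n"
  have "A_comp n {a} {b} = atom_comp n a b" by (simp add: A_comp_def)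
  moreover have "{a} \<in> Pow (Atoms n)" "{b} \<in> Pow (Atoms n)" using a by auto
  ultimately show ?thesis using P_comp by metis
qed

lemma mand: "a \<in> Atoms n \<Longrightarrow> b \<in> Atoms n \<Longrightarrow> c \<in> atom_comp n a b \<Longrightarrow> (x, y) \<in> h {c}
   \<Longrightarrow> \<exists>z. (x, z) \<in> h {a} \<and> (z, y) \<in> h {b}"
proof -
  assume a: "a \<in> Atoms n" "b \<in> Atoms n" "c \<in> atom_comp n a b" "(x, y) \<in> h {c}"
  have "h {c} \<subseteq> h (atom_comp n a b)" by (rule hmono) (use a atom_comp_sub in auto)
  then show ?thesis using a hcomp by auto
qed

lemma hsym: "a \<in> Atoms n \<Longrightarrow> (x, y) \<in> h {a} \<Longrightarrow> (y, x) \<in> h {a}"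
proof -
  assume a: "a \<in> Atoms n" "(x, y) \<in> h {a}"
  then have "h {a} = converse (h {a})" using P_conv by (simp add: A_conv_def)
  then show ?thesis using a by blast
qed

lemma inU: "a \<in> Atoms n \<Longrightarrow> (x, y) \<in> h {a} \<Longrightarrow> x \<in> U \<and> y \<in> U"
  using hsub[of "{a}"] by auto

lemma irr: "a \<in> Atoms n \<Longrightarrow> a \<noteq> One \<Longrightarrow> (x, x) \<notin> h {a}"
proof
  assume a: "a \<in> Atoms n" "a \<noteq> One" "(x, x) \<in> h {a}"
  then have "x \<in> U" using inU by blast
  then have "(x, x) \<in> h {One}" using hid by auto
  moreover have "One \<in> Atoms n" by (simp add: Atoms_def)
  ultimately show False using hdisj[of a One] a by auto
qed

lemma forb: "j \<in> {1..n} \<Longrightarrow> k \<in> {1..n} \<Longrightarrow> (x, y) \<in> h {B j} \<Longrightarrow> (y, z) \<in> h {B k}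
   \<Longrightarrow> x = z \<or> (x, z) \<in> h {R}"
proof -
  assume a: "j \<in> {1..n}" "k \<in> {1..n}" "(x, y) \<in> h {B j}" "(y, z) \<in> h {B k}"
  have A: "B j \<in> Atoms n" "B k \<in> Atoms n" using a by (auto simp: Atoms_def)
  have "(x, z) \<in> h (atom_comp n (B j) (B k))" using hcomp[OF A] a by auto
  also have "h (atom_comp n (B j) (B k)) \<subseteq> h ({One} \<union> {R})"
    by (rule hmono) (auto simp: atom_comp_def Atoms_def DivAtoms_def)
  also have "\<dots> = h {One} \<union> h {R}" by (rule hun) (auto simp: Atoms_def)
  finally show ?thesis using hid by auto
qed

lemma Une: "U \<noteq> {}"
proof
  assume "U = {}"
  then have "h {One} = h {}" using hid hempty by simp
  moreover have "inj_on h (Pow (Atoms n))" by (rule P_inj)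
  ultimately have "{One} = ({}::atom set)" unfolding inj_on_def by (auto simp: Atoms_def)
  then show False by simp
qed


lemma finDiv: "finite (DivAtoms n)"
  by (simp add: DivAtoms_def Atoms_def)

lemma classes_count:
  assumes fin: "finite U" and k: "k \<in> {1..n}" and w: "(p, w) \<in> h {R}"
    and al: "\<alpha> \<in> DivAtoms n" and ac: "a \<noteq> c" "(p, a) \<in> h {B k}" "(p, c) \<in> h {B k}"
    "(a, w) \<in> h {\<alpha>}" "(c, w) \<in> h {\<alpha>}"
  shows "n + 2 \<le> card {y. (p, y) \<in> h {B k}}"
proof -
  let ?S = "{y. (p, y) \<in> h {B k}}"
  define D where "D \<beta> = {z \<in> ?S. (z, w) \<in> h {\<beta>}}" for \<beta>
  have Bk: "B k \<in> Atoms n" using k by (simp add: Atoms_def)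
  have DivA: "DivAtoms n \<subseteq> Atoms n" by (auto simp: DivAtoms_def)
  have RA: "R \<in> Atoms n" by (simp add: Atoms_def)
  have finS: "finite ?S" by (rule finite_subset[OF _ fin]) (use inU Bk in blast)
  have ne: "D \<beta> \<noteq> {}" if b: "\<beta> \<in> DivAtoms n" for \<beta>
  proof -
    have "R \<in> atom_comp n (B k) \<beta>" using b k by (auto simp: atom_comp_def DivAtoms_def Atoms_def)
    then obtain z where "(p, z) \<in> h {B k}" "(z, w) \<in> h {\<beta>}"
      using mand[OF Bk _ _ w] b DivA by blast
    then show ?thesis by (auto simp: D_def)
  qed
  have finD: "finite (D \<beta>)" for \<beta> using finS by (auto simp: D_def)
  have disj: "\<forall>\<beta>\<in>DivAtoms n. \<forall>\<gamma>\<in>DivAtoms n. \<beta> \<noteq> \<gamma> \<longrightarrow> D \<beta> \<inter> D \<gamma> = {}"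
  proof (intro ballI impI)
    fix \<beta> \<gamma> assume "\<beta> \<in> DivAtoms n" "\<gamma> \<in> DivAtoms n" "\<beta> \<noteq> \<gamma>"
    then have "h {\<beta>} \<inter> h {\<gamma>} = {}" using hdisj DivA by blast
    then show "D \<beta> \<inter> D \<gamma> = {}" unfolding D_def by blast
  qed
  have "card (\<Union>\<beta>\<in>DivAtoms n. D \<beta>) = (\<Sum>\<beta>\<in>DivAtoms n. card (D \<beta>))"
    by (rule card_UN_disjoint) (use finDiv finD disj in auto)
  also have "\<dots> = card (D \<alpha>) + (\<Sum>\<beta>\<in>DivAtoms n - {\<alpha>}. card (D \<beta>))"
    using al finDiv by (simp add: sum.remove)
  finally have eq: "card (\<Union>\<beta>\<in>DivAtoms n. D \<beta>) = card (D \<alpha>) + (\<Sum>\<beta>\<in>DivAtoms n - {\<alpha>}. card (D \<beta>))" .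
  have "{a, c} \<subseteq> D \<alpha>" using ac unfolding D_def by auto
  then have "card {a, c} \<le> card (D \<alpha>)" by (rule card_mono[OF finD])
  then have c2: "2 \<le> card (D \<alpha>)" using ac(1) by simp
  have "(\<Sum>\<beta>\<in>DivAtoms n - {\<alpha>}. (1::nat)) \<le> (\<Sum>\<beta>\<in>DivAtoms n - {\<alpha>}. card (D \<beta>))"
  proof (rule sum_mono)
    fix \<beta> assume "\<beta> \<in> DivAtoms n - {\<alpha>}"
    then show "1 \<le> card (D \<beta>)" using ne finD by (simp add: Suc_le_eq card_gt_0_iff)
  qed
  moreover have "(\<Sum>\<beta>\<in>DivAtoms n - {\<alpha>}. (1::nat)) = n"
    using card_Div[of n] al finDiv by simp
  ultimately have "n + 2 \<le> card (\<Union>\<beta>\<in>DivAtoms n. D \<beta>)" using eq c2 by linarith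
  also have "\<dots> \<le> card ?S" by (rule card_mono[OF finS]) (auto simp: D_def)
  finally show ?thesis .
qed

lemma Bk_big:
  assumes fin: "finite U" and p: "p \<in> U" and k: "k \<in> {1..n}"
  shows "n + 2 \<le> card {y. (p, y) \<in> h {B k}}"
proof -
  have Bk: "B k \<in> Atoms n" using k by (simp add: Atoms_def)
  have RA: "R \<in> Atoms n" by (simp add: Atoms_def)
  have OA: "One \<in> Atoms n" by (simp add: Atoms_def)
  have RD: "R \<in> DivAtoms n" by (simp add: Atoms_def DivAtoms_def)
  have "(p, p) \<in> h {One}" using hid p by auto
  then obtain a where pa: "(p, a) \<in> h {B k}"
    using mand[OF Bk Bk, of One p p] by (auto simp: atom_comp_def)
  have "B k \<in> atom_comp n (B k) R" using k by (auto simp: atom_comp_def DivAtoms_def Atoms_def)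
  then obtain c where pc: "(p, c) \<in> h {B k}" and ca: "(c, a) \<in> h {R}"
    using mand[OF Bk RA _ pa] by blast
  have acne: "a \<noteq> c" using irr[OF RA] ca by auto
  have ac: "(a, c) \<in> h {R}" using hsym[OF RA ca] .
  let ?S = "{y. (p, y) \<in> h {B k}}"
  have finS: "finite ?S" by (rule finite_subset[OF _ fin]) (use inU Bk in blast)
  show ?thesis
  proof (cases "n = 1")
    case True
    then have k1: "k = 1" using k by simp
    have "R \<in> atom_comp n R R" by (simp add: atom_comp_def DivAtoms_def Atoms_def)
    then obtain w where aw: "(a, w) \<in> h {R}" and wc: "(w, c) \<in> h {R}"
      using mand[OF RA RA _ ac] by blast
    have wU: "w \<in> U" using inU[OF RA aw] by blast
    have "w \<noteq> p"
    proof
      assume "w = p"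
      then have "(a, p) \<in> h {R}" using aw by simp
      moreover have "(a, p) \<in> h {B k}" using hsym[OF Bk pa] .
      ultimately show False using hdisj[OF RA Bk] by auto
    qed
    then obtain \<gamma> where \<gamma>: "\<gamma> \<in> Atoms n" "(p, w) \<in> h {\<gamma>}" "\<gamma> \<noteq> One"
      using cover[OF p wU] hid by auto
    then have "\<gamma> = R \<or> \<gamma> = B 1" using True by (auto simp: Atoms_def)
    then show ?thesis
    proof
      assume "\<gamma> = R"
      then show ?thesis
        using classes_count[OF fin k _ RD acne pa pc aw hsym[OF RA wc]] \<gamma> by simp
    next
      assume "\<gamma> = B 1"
      then have pw: "(p, w) \<in> h {B k}" using \<gamma> k1 by simp
      have "w \<noteq> a" using aw irr[OF RA] by auto
      moreover have "w \<noteq> c" using wc irr[OF RA] by auto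
      ultimately have "card {a, c, w} = 3" using acne by simp
      moreover have "{a, c, w} \<subseteq> ?S" using pa pc pw by auto
      ultimately have "3 \<le> card ?S" using card_mono[OF finS] by metis
      then show ?thesis using True by simp
    qed
  next
    case False
    define j where "j = (if k = 1 then 2 else (1::nat))"
    have j: "j \<in> {1..n}" "j \<noteq> k" using False k by (auto simp: j_def)
    have Bj: "B j \<in> Atoms n" using j by (simp add: Atoms_def)
    have BjD: "B j \<in> DivAtoms n" using j by (simp add: Atoms_def DivAtoms_def)
    have "R \<in> atom_comp n (B j) (B j)" by (simp add: atom_comp_def DivAtoms_def Atoms_def)
    then obtain w where aw: "(a, w) \<in> h {B j}" and wc: "(w, c) \<in> h {B j}"
      using mand[OF Bj Bj _ ac] by blast
    have "w \<noteq> p"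
    proof
      assume "w = p"
      then have "(a, p) \<in> h {B j}" using aw by simp
      moreover have "(a, p) \<in> h {B k}" using hsym[OF Bk pa] .
      ultimately show False using hdisj[OF Bj Bk] j by auto
    qed
    then have pw: "(p, w) \<in> h {R}" using forb[OF k j(1) pa aw] by simp
    show ?thesis
      using classes_count[OF fin k pw BjD acne pa pc aw hsym[OF Bj wc]] .
  qed
qed

lemma main_count:
  assumes fin: "finite U" and n1: "1 \<le> n"
  shows "2 * n^2 + 4 * n + 1 \<le> card U"
proof -
  obtain x where x: "x \<in> U" using Une by blast
  have RA: "R \<in> Atoms n" by (simp add: Atoms_def)
  have OA: "One \<in> Atoms n" by (simp add: Atoms_def)
  have B1: "B 1 \<in> Atoms n" using n1 by (simp add: Atoms_def)
  have BA: "B k \<in> Atoms n" if "k \<in> {1..n}" for k using that by (simp add: Atoms_def)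
  have "(x, x) \<in> h {One}" using hid x by auto
  then obtain y where xy: "(x, y) \<in> h {B 1}"
    using mand[OF B1 B1, of One x x] by (auto simp: atom_comp_def)
  have yU: "y \<in> U" using inU[OF B1 xy] by blast
  have "B 1 \<in> atom_comp n R R" using n1 by (simp add: atom_comp_def DivAtoms_def Atoms_def)
  then obtain z where xz: "(x, z) \<in> h {R}" and zy: "(z, y) \<in> h {R}"
    using mand[OF RA RA _ xy] by blast
  define Bs where "Bs k p = {t. (p, t) \<in> h {B k}}" for k p
  have finB: "finite (Bs k p)" if "k \<in> {1..n}" for k p
    by (rule finite_subset[OF _ fin]) (use inU BA that in \<open>auto simp: Bs_def\<close>)
  have disjB: "\<forall>i\<in>{1..n}. \<forall>j\<in>{1..n}. i \<noteq> j \<longrightarrow> Bs i p \<inter> Bs j p = {}" for p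
  proof (intro ballI impI)
    fix i j assume "i \<in> {1..n}" "j \<in> {1..n}" "i \<noteq> j"
    then have "h {B i} \<inter> h {B j} = {}" using hdisj BA by blast
    then show "Bs i p \<inter> Bs j p = {}" unfolding Bs_def by blast
  qed
  have cardU: "n * (n + 2) \<le> card (\<Union>k\<in>{1..n}. Bs k p)" if "p \<in> U" for p
  proof -
    have "card (\<Union>k\<in>{1..n}. Bs k p) = (\<Sum>k\<in>{1..n}. card (Bs k p))"
      by (rule card_UN_disjoint) (use finB disjB in auto)
    moreover have "(\<Sum>k\<in>{1..n}. n + 2) \<le> (\<Sum>k\<in>{1..n}. card (Bs k p))"
      by (rule sum_mono) (use Bk_big[OF fin that] in \<open>simp add: Bs_def\<close>)
    ultimately show ?thesis by simp
  qed
  let ?BX = "\<Union>k\<in>{1..n}. Bs k x" and ?BY = "\<Union>k\<in>{1..n}. Bs k y"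
  let ?RX = "{t. (x, t) \<in> h {R}}"
  have finRX: "finite (insert x ?RX)"
    by (rule finite_subset[OF _ fin]) (use inU RA x in blast)
  have finBY: "finite ?BY" using finB by auto
  have finBX: "finite ?BX" using finB by auto
  have sub1: "insert z ?BY \<subseteq> insert x ?RX"
  proof
    fix t assume "t \<in> insert z ?BY"
    then show "t \<in> insert x ?RX"
    proof
      assume "t = z" then show ?thesis using xz by simp
    next
      assume "t \<in> ?BY"
      then obtain k where k: "k \<in> {1..n}" "(y, t) \<in> h {B k}" by (auto simp: Bs_def)
      then show ?thesis using forb[OF _ k(1) xy k(2)] n1 by auto
    qed
  qed
  have znot: "z \<notin> ?BY"
  proof
    assume "z \<in> ?BY"
    then obtain k where k: "k \<in> {1..n}" "(y, z) \<in> h {B k}" by (auto simp: Bs_def)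
    moreover have "(y, z) \<in> h {R}" using hsym[OF RA zy] .
    ultimately show False using hdisj[OF RA BA[OF k(1)]] by auto
  qed
  have c1: "card ?BY + 1 \<le> card (insert x ?RX)"
    using card_mono[OF finRX sub1] znot finBY by simp
  have dj: "insert x ?RX \<inter> ?BX = {}"
  proof -
    have "x \<notin> ?BX" using irr BA by (auto simp: Bs_def)
    moreover have "?RX \<inter> ?BX = {}"
    proof -
      have "h {R} \<inter> h {B k} = {}" if "k \<in> {1..n}" for k using hdisj[OF RA BA[OF that]] by simp
      then show ?thesis unfolding Bs_def by blast
    qed
    ultimately show ?thesis by blast
  qed
  have sub2: "insert x ?RX \<union> ?BX \<subseteq> U"
    unfolding Bs_def using x inU[OF RA] inU[OF BA] by blast
  have "card (insert x ?RX) + card ?BX = card (insert x ?RX \<union> ?BX)"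
    using card_Un_disjoint[OF finRX finBX dj] by simp
  also have "\<dots> \<le> card U" by (rule card_mono[OF fin sub2])
  finally have "card (insert x ?RX) + card ?BX \<le> card U" .
  then have "n * (n + 2) + 1 + n * (n + 2) \<le> card U"
    using c1 cardU[OF x] cardU[OF yU] by linarith
  then show ?thesis by (simp add: power2_eq_square algebra_simps)
qed

end

theorem mainTheorem8:
  fixes n :: nat
  assumes "n \<ge> 1"
  shows "f n \<ge> enat (2 * n^2 + 4 * n + 1)"
  unfolding f_def
proof (rule Inf_greatest)
  fix \<alpha> assume "\<alpha> \<in> Spec n"
  then obtain U :: "nat set" and h where rep: "is_rep n U h"
    and \<alpha>: "\<alpha> = (if finite U then enat (card U) else \<infinity>)"
    unfolding Spec_def by blast
  show "enat (2 * n^2 + 4 * n + 1) \<le> \<alpha>"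
  proof (cases "finite U")
    case True
    then show ?thesis using main_count[OF rep True assms] \<alpha> by simp
  next
    case False
    then show ?thesis using \<alpha> by simp
  qed
qed

end
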